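(* Let $E=(C,V)$ be an approval election with $C$ nonempty and $V$ nonempty. Then $\mathrm{av\text{-}agr}(E)=1$ if and only if $E$ is an identity election, and $\mathrm{av\text{-}agr}(E)=0$ if and only if every candidate $c\in C$ is approved by exactly half of the voters, i.e. $|A(c)|=|V|/2$ for all $c\in C$.
   Context: An (approval) election is a pair $E=(C,V)$ where $C=\{c_1,\dots,c_m\}$ is a set of candidates and $V=(v_1,\dots,v_n)$ is a collection (with possible repetitions) of voters; each vote $v_i$ is a binary vector in $\{0,1\}^m$, with $v_i[j]=1$ meaning voter $v_i$ approves $c_j$. For a candidate $c$, $A(c)$ is the set of voters approving $c$. An identity election is one in which all votes are identical (all voters approve the same set of candidates). The Approval Agreement index is $\mathrm{av\text{-}agr}(E)=\frac{1}{|C|}\sum_{c\in C}\left|1-2\frac{|A(c)|}{|V|}\right|$. *)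

theory Defs
  imports Main Complex_Main
begin

text \<open>An approval election: a finite candidate set C and a list V of votes
  (repetitions allowed); each vote is the set of candidates it approves,
  i.e. the support of its binary vector over C, so each vote is a subset of C.\<close>

definition approval_election :: "'c set \<Rightarrow> 'c set list \<Rightarrow> bool" where
  "approval_election C V \<longleftrightarrow> finite C \<and> (\<forall>v \<in> set V. v \<subseteq> C)"

definition approvers :: "'c set list \<Rightarrow> 'c \<Rightarrow> nat set" where
  "approvers V c = {i. i < length V \<and> c \<in> V ! i}"

definition identity_election :: "'c set list \<Rightarrow> bool" where
  "identity_election V \<longleftrightarrow> (\<forall>i < length V. \<forall>j < length V. V ! i = V ! j)"

definition av_agr :: "'c set \<Rightarrow> 'c set list \<Rightarrow> real" where
  "av_agr C V = (1 / real (card C)) *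
     (\<Sum>c\<in>C. \<bar>1 - 2 * real (card (approvers V c)) / real (length V)\<bar>)"

end

theory Submission
  imports Defs
begin

lemma card_appr_le: "card (approvers V c) \<le> length V"
proof -
  have "approvers V c \<subseteq> {..<length V}" by (auto simp: approvers_def)
  then show ?thesis by (metis card_lessThan card_mono finite_lessThan)
qed

lemma appr0: "card (approvers V c) = 0 \<longleftrightarrow> (\<forall>i<length V. c \<notin> V ! i)"
proof -
  have "finite (approvers V c)" by (auto simp: approvers_def)
  then show ?thesis by (auto simp: approvers_def)
qed

lemma apprn: "card (approvers V c) = length V \<longleftrightarrow> (\<forall>i<length V. c \<in> V ! i)"
proof -
  have s: "approvers V c \<subseteq> {..<length V}" by (auto simp: approvers_def)
  have "card (approvers V c) = length V \<longleftrightarrow> approvers V c = {..<length V}"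
    using s by (metis card_lessThan card_subset_eq finite_lessThan)
  then show ?thesis by (auto simp: approvers_def)
qed

lemma sum_eq_card_iff:
  fixes f :: "'a \<Rightarrow> real"
  assumes "finite C" "\<And>c. c \<in> C \<Longrightarrow> f c \<le> 1"
  shows "(\<Sum>c\<in>C. f c) = real (card C) \<longleftrightarrow> (\<forall>c\<in>C. f c = 1)"
proof -
  have "(\<Sum>c\<in>C. f c) = real (card C) \<longleftrightarrow> (\<Sum>c\<in>C. 1 - f c) = 0"
    proof -
    have "(\<Sum>c\<in>C. 1 - f c) = real (card C) - (\<Sum>c\<in>C. f c)" by (simp add: sum_subtractf)
    then show ?thesis by linarith
  qed
  also have "\<dots> \<longleftrightarrow> (\<forall>c\<in>C. 1 - f c = 0)"
    using assms by (intro sum_nonneg_eq_0_iff) auto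
  finally show ?thesis by auto
qed

theorem proposition1:
  fixes C :: "'c set" and V :: "'c set list"
  assumes "approval_election C V" and "C \<noteq> {}" and "V \<noteq> []"
  shows "(av_agr C V = 1 \<longleftrightarrow> identity_election V)
       \<and> (av_agr C V = 0 \<longleftrightarrow>
            (\<forall>c\<in>C. real (card (approvers V c)) = real (length V) / 2))"
proof -
  have fin: "finite C" and sub: "\<And>v. v \<in> set V \<Longrightarrow> v \<subseteq> C"
    using assms(1) by (auto simp: approval_election_def)
  define n where "n = length V"
  have npos: "n > 0" using assms(3) by (simp add: n_def)
  have cpos: "card C > 0" using fin assms(2) by (simp add: card_gt_0_iff)
  define t where "t c = \<bar>1 - 2 * real (card (approvers V c)) / real n\<bar>" for c
  have x01: "0 \<le> real (card (approvers V c)) / real n \<and> real (card (approvers V c)) / real n \<le> 1" for c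
  proof -
    have "real (card (approvers V c)) \<le> real n" using card_appr_le[of V c] by (simp add: n_def)
    then show ?thesis using npos by simp
  qed
  have tx: "t c = \<bar>1 - 2 * (real (card (approvers V c)) / real n)\<bar>" for c
    by (simp add: t_def)
  have le1: "t c \<le> 1" for c
    using x01[of c] unfolding tx by linarith
  have t1: "t c = 1 \<longleftrightarrow> card (approvers V c) = 0 \<or> card (approvers V c) = n" for c
  proof -
    have "t c = 1 \<longleftrightarrow> real (card (approvers V c)) / real n = 0 \<or> real (card (approvers V c)) / real n = 1"
      using x01[of c] unfolding tx by linarith
    also have "\<dots> \<longleftrightarrow> card (approvers V c) = 0 \<or> card (approvers V c) = n"
      using npos by simp blast
    finally show ?thesis .
  qed
  have t0: "t c = 0 \<longleftrightarrow> real (card (approvers V c)) = real n / 2" for c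
  proof -
    have "t c = 0 \<longleftrightarrow> real (card (approvers V c)) / real n = 1 / 2"
      unfolding tx by linarith
    also have "\<dots> \<longleftrightarrow> real (card (approvers V c)) = real n / 2"
      using npos by (simp add: divide_eq_eq)
    finally show ?thesis .
  qed
  have av: "av_agr C V = (\<Sum>c\<in>C. t c) / real (card C)"
    by (simp add: av_agr_def t_def n_def)
  have A: "av_agr C V = 1 \<longleftrightarrow> (\<forall>c\<in>C. t c = 1)"
  proof -
    have "av_agr C V = 1 \<longleftrightarrow> (\<Sum>c\<in>C. t c) = real (card C)"
      unfolding av divide_eq_1_iff using cpos by auto
    then show ?thesis using sum_eq_card_iff[OF fin, of t] le1 by blast
  qed
  have B: "av_agr C V = 0 \<longleftrightarrow> (\<forall>c\<in>C. t c = 0)"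
  proof -
    have "av_agr C V = 0 \<longleftrightarrow> (\<Sum>c\<in>C. t c) = 0" using cpos by (simp add: av)
    also have "\<dots> \<longleftrightarrow> (\<forall>c\<in>C. t c = 0)"
      using fin by (intro sum_nonneg_eq_0_iff) (simp_all add: t_def)
    finally show ?thesis .
  qed
  have I: "identity_election V \<longleftrightarrow> (\<forall>c\<in>C. (\<forall>i<n. c \<notin> V ! i) \<or> (\<forall>i<n. c \<in> V ! i))"
  proof
    assume idv: "identity_election V"
    have eq: "V ! i = V ! 0" if "i < n" for i
      using idv npos that unfolding identity_election_def n_def by blast
    show "\<forall>c\<in>C. (\<forall>i<n. c \<notin> V ! i) \<or> (\<forall>i<n. c \<in> V ! i)"
    proof
      fix c assume "c \<in> C"
      show "(\<forall>i<n. c \<notin> V ! i) \<or> (\<forall>i<n. c \<in> V ! i)"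
      proof (cases "c \<in> V ! 0")
        case True
        have "\<forall>i<n. c \<in> V ! i"
        proof (intro allI impI)
          fix i assume "i < n"
          then have "V ! i = V ! 0" by (rule eq)
          then show "c \<in> V ! i" using True by simp
        qed
        then show ?thesis by (rule disjI2)
      next
        case False
        have "\<forall>i<n. c \<notin> V ! i"
        proof (intro allI impI)
          fix i assume "i < n"
          then have "V ! i = V ! 0" by (rule eq)
          then show "c \<notin> V ! i" using False by simp
        qed
        then show ?thesis by (rule disjI1)
      qed
    qed
  next
    assume H: "\<forall>c\<in>C. (\<forall>i<n. c \<notin> V ! i) \<or> (\<forall>i<n. c \<in> V ! i)"
    have "V ! i = V ! j" if "i < n" "j < n" for i j
    proof
      have si: "V ! i \<subseteq> C" and sj: "V ! j \<subseteq> C"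
        using sub[OF nth_mem[of i V]] sub[OF nth_mem[of j V]] that unfolding n_def by blast+
      show "V ! i \<subseteq> V ! j"
      proof
        fix x assume x: "x \<in> V ! i"
        then have "x \<in> C" using si by blast
        then have "(\<forall>k<n. x \<notin> V ! k) \<or> (\<forall>k<n. x \<in> V ! k)" using H by blast
        then show "x \<in> V ! j" using x that by blast
      qed
      show "V ! j \<subseteq> V ! i"
      proof
        fix x assume x: "x \<in> V ! j"
        then have "x \<in> C" using sj by blast
        then have "(\<forall>k<n. x \<notin> V ! k) \<or> (\<forall>k<n. x \<in> V ! k)" using H by blast
        then show "x \<in> V ! i" using x that by blast
      qed
    qed
    then show "identity_election V" unfolding identity_election_def n_def by blast
  qed
  show ?thesis
    using A B I t1 t0 appr0[of V] apprn[of V] by (simp add: n_def)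
qed

end
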